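(* Let $m\ge3$ and $2\le t\le m-1$. The hypergraph PIN model on the complete $t$-uniform hypergraph $K_{m,t}$ is strict Type $\mathcal S$.
   Context: Let $\mathcal M=\{1,\dots,m\}$. A hypergraph PIN model on $\mathcal H=(\mathcal M,\mathcal E)$, with $\mathcal E$ a finite multiset of subsets of $\mathcal M$, is defined as follows. Let $\mathcal E^{(n)}$ contain $n$ copies of each element of $\mathcal E$. Independent Bernoulli(1/2) variables $\xi_e$ are attached to the $e\in\mathcal E^{(n)}$, and $X^n_i=(\xi_e:e\in\mathcal E^{(n)},\ i\in e)$; the single-letter source $X_{\mathcal M}$ is the case $n=1$. $K_{m,t}=(\mathcal M,\mathcal E)$ is the hypergraph in which $\mathcal E$ contains exactly one copy of every $t$-element subset of $\mathcal M$. $\Delta(\mathcal P)=\frac1{|\mathcal P|-1}[\sum_{A\in\mathcal P}H(X_A)-H(X_{\mathcal M})]$ for partitions of $\mathcal M$ with at least 2 cells, where $X_A=(X_i:i\in A)$. The source is strict Type $\mathcal S$ if the singleton partition $\{\{1\},\dots,\{m\}\}$ is the unique minimizer of $\Delta$. *)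

theory Defs
  imports "HOL-Probability.Probability" "HOL-Library.Disjoint_Sets"
begin

definition pmf_entropy :: "'a pmf \<Rightarrow> real" where
  "pmf_entropy p = - (\<Sum>x\<in>set_pmf p. pmf p x * log 2 (pmf p x))"

text \<open>The (multi)set of hyperedges is given by a finite index
  set Ed together with an incidence map inc; each index e in Ed is one hyperedge
  inc e (so repeated hyperedges are allowed).\<close>
definition pin_xi :: "'e set \<Rightarrow> ('e \<Rightarrow> bool) pmf" where
  "pin_xi Ed = Pi_pmf Ed False (\<lambda>_. bernoulli_pmf (1/2))"

definition pin_Xi :: "'e set \<Rightarrow> ('e \<Rightarrow> nat set) \<Rightarrow> nat \<Rightarrow> ('e \<Rightarrow> bool) \<Rightarrow> ('e \<Rightarrow> bool option)" where
  "pin_Xi Ed inc i xi = (\<lambda>e. if e \<in> Ed \<and> i \<in> inc e then Some (xi e) else None)"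

definition pin_XA :: "'e set \<Rightarrow> ('e \<Rightarrow> nat set) \<Rightarrow> nat set \<Rightarrow> ('e \<Rightarrow> bool) \<Rightarrow> (nat \<Rightarrow> ('e \<Rightarrow> bool option) option)" where
  "pin_XA Ed inc A xi = (\<lambda>i. if i \<in> A then Some (pin_Xi Ed inc i xi) else None)"

definition pin_H :: "'e set \<Rightarrow> ('e \<Rightarrow> nat set) \<Rightarrow> nat set \<Rightarrow> real" where
  "pin_H Ed inc A = pmf_entropy (map_pmf (pin_XA Ed inc A) (pin_xi Ed))"

definition pin_Delta :: "nat set \<Rightarrow> 'e set \<Rightarrow> ('e \<Rightarrow> nat set) \<Rightarrow> nat set set \<Rightarrow> real" where
  "pin_Delta M Ed inc P =
     ((\<Sum>A\<in>P. pin_H Ed inc A) - pin_H Ed inc M) / (real (card P) - 1)"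

definition singleton_partition :: "nat set \<Rightarrow> nat set set" where
  "singleton_partition M = {{i} | i. i \<in> M}"

definition strict_type_S :: "nat set \<Rightarrow> 'e set \<Rightarrow> ('e \<Rightarrow> nat set) \<Rightarrow> bool" where
  "strict_type_S M Ed inc \<longleftrightarrow>
     partition_on M (singleton_partition M) \<and> card (singleton_partition M) \<ge> 2 \<and>
     (\<forall>P. partition_on M P \<and> card P \<ge> 2 \<and> P \<noteq> singleton_partition M \<longrightarrow>
          pin_Delta M Ed inc (singleton_partition M) < pin_Delta M Ed inc P)"

text \<open>Edges of K_{m,t}: exactly one copy of every t-element subset of {1..m}
  (index set = these subsets, incidence = identity).\<close>
definition K_edges :: "nat \<Rightarrow> nat \<Rightarrow> nat set set" where
  "K_edges m t = {S. S \<subseteq> {1..m} \<and> card S = t}"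

end

theory Submission
  imports Defs
begin


lemma ent_const:
  assumes fin: "finite (set_pmf p)" and c: "\<And>x. x \<in> set_pmf p \<Longrightarrow> pmf p x = c"
  shows "pmf_entropy p = - log 2 c"
proof -
  have s1: "(\<Sum>x\<in>set_pmf p. pmf p x) = 1" using sum_pmf_eq_1[OF fin] by simp
  hence "real (card (set_pmf p)) * c = 1" using c by simp
  moreover have "(\<Sum>x\<in>set_pmf p. pmf p x * log 2 (pmf p x)) = real (card (set_pmf p)) * c * log 2 c"
    using c by simp
  ultimately show ?thesis unfolding pmf_entropy_def by simp
qed

lemma pin_H_card:
  assumes fin: "finite Ed"
  shows "pin_H Ed inc A = real (card {e\<in>Ed. inc e \<inter> A \<noteq> {}})"
proof -
  define EA where "EA = {e\<in>Ed. inc e \<inter> A \<noteq> {}}"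
  define g where "g = pin_XA Ed inc A"
  define r where "r = (\<lambda>(f::'a\<Rightarrow>bool) x. if x \<in> EA then f x else False)"
  define Q where "Q = Pi_pmf EA False (\<lambda>_. bernoulli_pmf (1/2))"
  have EAsub: "EA \<subseteq> Ed" and finEA: "finite EA" using fin by (auto simp: EA_def)
  have gr: "g \<circ> r = g"
    by (auto simp: fun_eq_iff g_def r_def pin_XA_def pin_Xi_def EA_def)
  have "map_pmf g (pin_xi Ed) = map_pmf g (map_pmf r (pin_xi Ed))"
    by (simp add: map_pmf_comp gr[unfolded comp_def])
  also have "map_pmf r (pin_xi Ed) = Q"
    unfolding Q_def pin_xi_def r_def by (rule Pi_pmf_subset[OF fin EAsub, symmetric])
  finally have eq: "map_pmf g (pin_xi Ed) = map_pmf g Q" .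
  have supp: "set_pmf Q \<subseteq> {f. \<forall>x. x \<notin> EA \<longrightarrow> f x = False}"
    unfolding Q_def by (rule set_Pi_pmf_subset[OF finEA])
  have inj: "inj_on g (set_pmf Q)"
  proof (rule inj_onI)
    fix f1 f2 assume f1: "f1 \<in> set_pmf Q" and f2: "f2 \<in> set_pmf Q" and e: "g f1 = g f2"
    show "f1 = f2"
    proof
      fix x show "f1 x = f2 x"
      proof (cases "x \<in> EA")
        case True
        then obtain i where i: "i \<in> inc x" "i \<in> A" "x \<in> Ed" by (auto simp: EA_def)
        have "g f1 i = g f2 i" using e by simp
        hence "pin_Xi Ed inc i f1 x = pin_Xi Ed inc i f2 x" using i by (simp add: g_def pin_XA_def)
        thus ?thesis using i by (simp add: pin_Xi_def)
      next
        case False thus ?thesis using supp f1 f2 by auto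
      qed
    qed
  qed
  have finQ: "finite (set_pmf Q)"
    unfolding Q_def using finEA by (simp add: set_Pi_pmf finite_PiE_dflt)
  have pmfQ: "pmf Q f = (1/2) ^ card EA" if "f \<in> set_pmf Q" for f
    using that supp finEA by (auto simp: Q_def pmf_Pi)
  have "pmf_entropy (map_pmf g Q) = - log 2 ((1/2) ^ card EA)"
  proof (rule ent_const)
    show "finite (set_pmf (map_pmf g Q))" using finQ by simp
    fix y assume "y \<in> set_pmf (map_pmf g Q)"
    then obtain f where f: "f \<in> set_pmf Q" "y = g f" by auto
    show "pmf (map_pmf g Q) y = (1/2) ^ card EA"
      using pmf_map_inj[OF inj f(1)] pmfQ[OF f(1)] f by simp
  qed
  also have "\<dots> = real (card EA)"
    by (simp add: log_nat_power log_divide)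
  finally show ?thesis unfolding pin_H_def using eq by (simp add: g_def EA_def)
qed



lemma bin_strict:
  fixes b n t :: nat
  assumes "1 \<le> b" "b < n" "2 \<le> t" "t \<le> n"
  shows "n * (b choose t) < b * (n choose t)"
proof -
  obtain b' where b: "b = Suc b'" using assms by (cases b) auto
  obtain n'' where n: "n = Suc (Suc n'')" using assms by (cases n; cases "n - 1") auto
  obtain t'' where t: "t = Suc (Suc t'')" using assms by (cases t; cases "t - 1") auto
  have e1: "b * (b' choose Suc t'') = (b choose t) * t"
    using Suc_times_binomial_eq[of b' "Suc t''"] b t by simp
  have e2: "n * (Suc n'' choose Suc t'') = (n choose t) * t"
    using Suc_times_binomial_eq[of "Suc n''" "Suc t''"] n t by simp
  have "b' \<le> n''" using assms b n by simp
  hence l1: "b' choose Suc t'' \<le> n'' choose Suc t''" by (rule binomial_right_mono)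
  have l2: "n'' choose t'' > 0" using assms n t by simp
  have l3: "b' choose Suc t'' < Suc n'' choose Suc t''" using l1 l2 by (simp del: zero_less_binomial_iff)
  have "t * (n * (b choose t)) = n * (b * (b' choose Suc t''))" using e1 by (simp add: ac_simps)
  also have "\<dots> < n * (b * (Suc n'' choose Suc t''))"
    using l3 assms by simp
  also have "\<dots> = t * (b * (n choose t))" using e2 by (simp add: ac_simps)
  finally show ?thesis using assms by simp
qed

lemma phi_le:
  fixes a m t :: nat
  assumes "1 \<le> a" "a \<le> m" "2 \<le> t" "t \<le> m - 1"
  shows "(m - 1) * ((m - a) choose t) \<le> (m - a) * ((m - 1) choose t)"
proof -
  consider "a = 1" | "a = m" | "1 < a \<and> a < m" using assms by linarith
  thus ?thesis
  proof cases
    case 3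
    hence "1 \<le> m - a" "m - a < m - 1" by auto
    thus ?thesis using bin_strict[of "m - a" "m - 1" t] assms by simp
  qed (use assms in auto)
qed

lemma phi_less:
  fixes a m t :: nat
  assumes "1 < a" "a < m" "2 \<le> t" "t \<le> m - 1"
  shows "(m - 1) * ((m - a) choose t) < (m - a) * ((m - 1) choose t)"
  using bin_strict[of "m - a" "m - 1" t] assms by simp



lemma meet_card:
  assumes A: "A \<subseteq> {1..m}"
  shows "real (card {e\<in>K_edges m t. e \<inter> A \<noteq> {}}) = real (m choose t) - real ((m - card A) choose t)"
proof -
  have finK: "finite (K_edges m t)" unfolding K_edges_def
    by (rule finite_subset[of _ "Pow {1..m}"]) auto
  have cK: "card (K_edges m t) = m choose t"
    unfolding K_edges_def using n_subsets[of "{1..m}" t] by simp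
  have eq: "{e\<in>K_edges m t. e \<inter> A = {}} = {B. B \<subseteq> {1..m} - A \<and> card B = t}"
    unfolding K_edges_def by auto
  have cA: "card ({1..m} - A) = m - card A"
    using A by (simp add: card_Diff_subset finite_subset)
  have c2: "card {e\<in>K_edges m t. e \<inter> A = {}} = (m - card A) choose t"
    unfolding eq using n_subsets[of "{1..m} - A" t] cA by simp
  have "{e\<in>K_edges m t. e \<inter> A \<noteq> {}} = K_edges m t - {e\<in>K_edges m t. e \<inter> A = {}}" by auto
  hence "card {e\<in>K_edges m t. e \<inter> A \<noteq> {}} = card (K_edges m t) - card {e\<in>K_edges m t. e \<inter> A = {}}"
    using finK by (simp add: card_Diff_subset)
  moreover have "card {e\<in>K_edges m t. e \<inter> A = {}} \<le> card (K_edges m t)"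
    using finK by (intro card_mono) auto
  ultimately show ?thesis using cK c2 by (simp add: of_nat_diff)
qed

lemma H_eq:
  assumes A: "A \<subseteq> {1..m}"
  shows "pin_H (K_edges m t) (\<lambda>e. e) A = real (m choose t) - real ((m - card A) choose t)"
proof -
  have finK: "finite (K_edges m t)" unfolding K_edges_def
    by (rule finite_subset[of _ "Pow {1..m}"]) auto
  show ?thesis using pin_H_card[OF finK, of "\<lambda>e. e" A] meet_card[OF A, of t] by simp
qed

lemma Delta_eq:
  assumes P: "partition_on {1..m} P" and k: "card P \<ge> 2" and t: "t \<ge> 1"
  shows "pin_Delta {1..m} (K_edges m t) (\<lambda>e. e) P =
     real (m choose t) - real (\<Sum>A\<in>P. (m - card A) choose t) / (real (card P) - 1)"
proof -
  have sub: "A \<subseteq> {1..m}" if "A \<in> P" for A using P that partition_onD1 by blast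
  have finP: "finite P" using finite_elements[OF _ P] by simp
  have "(\<Sum>A\<in>P. pin_H (K_edges m t) (\<lambda>e. e) A) = (\<Sum>A\<in>P. real (m choose t) - real ((m - card A) choose t))"
    using H_eq sub by (intro sum.cong) auto
  also have "\<dots> = real (card P) * real (m choose t) - real (\<Sum>A\<in>P. (m - card A) choose t)"
    by (simp add: sum_subtractf)
  finally have s: "(\<Sum>A\<in>P. pin_H (K_edges m t) (\<lambda>e. e) A) = real (card P) * real (m choose t) - real (\<Sum>A\<in>P. (m - card A) choose t)" .
  have hm: "pin_H (K_edges m t) (\<lambda>e. e) {1..m} = real (m choose t)"
    using H_eq[of "{1..m}" m t] t by simp
  have kk: "real (card P) - 1 > 0" using k by simp
  show ?thesis unfolding pin_Delta_def s hm using kk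
    by (simp add: field_simps)
qed



lemma single_eq: "singleton_partition M = (\<lambda>x. {x}) ` M"
  unfolding singleton_partition_def by auto

theorem corollary3:
  fixes m t :: nat
  assumes "m \<ge> 3" and "2 \<le> t" and "t \<le> m - 1"
  shows "strict_type_S {1..m} (K_edges m t) (\<lambda>e. e)"
proof -
  let ?M = "{1..m}"
  let ?S = "singleton_partition ?M"
  let ?C = "(m - 1) choose t"
  have Sp: "partition_on ?M ?S" unfolding single_eq by (rule partition_on_singletons)
  have cS: "card ?S = m" unfolding single_eq by (simp add: card_image)
  have sumS: "(\<Sum>A\<in>?S. (m - card A) choose t) = m * ?C"
    unfolding single_eq by (simp add: sum.reindex)
  have DS: "pin_Delta ?M (K_edges m t) (\<lambda>e. e) ?S = real (m choose t) - real (m * ?C) / (real m - 1)"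
    using Delta_eq[OF Sp, of t] cS sumS assms by (simp del: of_nat_sum)
  have main: "pin_Delta ?M (K_edges m t) (\<lambda>e. e) ?S < pin_Delta ?M (K_edges m t) (\<lambda>e. e) P"
    if P: "partition_on ?M P" and k: "card P \<ge> 2" and ne: "P \<noteq> ?S" for P
  proof -
    let ?k = "card P"
    have finP: "finite P" using finite_elements[OF _ P] by simp
    have sub: "A \<subseteq> ?M" if "A \<in> P" for A using P that partition_onD1 by blast
    have nem: "A \<noteq> {}" if "A \<in> P" for A using P that partition_onD3 by blast
    have finA: "finite A" if "A \<in> P" for A using sub[OF that] finite_subset by blast
    have c1: "1 \<le> card A" if "A \<in> P" for A using nem[OF that] finA[OF that]
      by (simp add: Suc_le_eq card_gt_0_iff)
    have cm: "card A < m" if "A \<in> P" for A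
    proof -
      obtain B where B: "B \<in> P" "B \<noteq> A"
      proof -
        have "\<not> P \<subseteq> {A}"
        proof
          assume "P \<subseteq> {A}"
          hence "card P \<le> 1" using card_mono[of "{A}" P] by simp
          thus False using k by simp
        qed
        thus ?thesis using that by blast
      qed
      have dj: "disjnt A B" using pairwiseD[OF partition_onD2[OF P] that B(1) B(2)[symmetric]] .
      obtain x where xB: "x \<in> B" using nem[OF B(1)] by blast
      have xA: "x \<notin> A" using dj xB by (meson disjnt_iff)
      have xM: "x \<in> ?M" using sub[OF B(1)] xB by blast
      have "A \<subset> ?M" using sub[OF that] xA xM by blast
      thus ?thesis using psubset_card_mono[of ?M A] by simp
    qed
    have ex2: "\<exists>A\<in>P. 2 \<le> card A"
    proof (rule ccontr)
      assume "\<not> ?thesis"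
      hence one: "card A = 1" if "A \<in> P" for A using c1[OF that] that by force
      have "P = ?S"
      proof
        show "P \<subseteq> ?S"
        proof
          fix A assume "A \<in> P"
          then obtain x where "A = {x}" using one card_1_singletonE by blast
          moreover have "x \<in> ?M" using sub[OF \<open>A \<in> P\<close>] \<open>A = {x}\<close> by blast
          ultimately show "A \<in> ?S" unfolding singleton_partition_def by blast
        qed
      next
        show "?S \<subseteq> P"
        proof
          fix A assume "A \<in> ?S"
          then obtain x where x: "x \<in> ?M" "A = {x}" unfolding singleton_partition_def by auto
          then obtain B where B: "B \<in> P" "x \<in> B" using P partition_onD1 by blast
          then obtain y where "B = {y}" using one card_1_singletonE by blast
          thus "A \<in> P" using B x by auto
        qed
      qed
      thus False using ne by simp
    qed
    then obtain A0 where A0: "A0 \<in> P" "2 \<le> card A0" by blast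
    have lt: "(\<Sum>A\<in>P. (m - 1) * ((m - card A) choose t)) < (\<Sum>A\<in>P. (m - card A) * ?C)"
    proof (rule sum_strict_mono_ex1[OF finP])
      show "\<forall>A\<in>P. (m - 1) * ((m - card A) choose t) \<le> (m - card A) * ?C"
      proof
        fix A assume AP: "A \<in> P"
        show "(m - 1) * ((m - card A) choose t) \<le> (m - card A) * ?C"
          using phi_le[OF c1[OF AP] less_imp_le[OF cm[OF AP]]] assms(2,3) .
      qed
      have "(m - 1) * ((m - card A0) choose t) < (m - card A0) * ?C"
        using phi_less[of "card A0" m t] A0(2) cm[OF A0(1)] assms(2,3) by linarith
      thus "\<exists>A\<in>P. (m - 1) * ((m - card A) choose t) < (m - card A) * ?C"
        using A0(1) by blast
    qed
    have scard: "(\<Sum>A\<in>P. card A) = m"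
    proof -
      have "sum card P = card (\<Union>P)" using card_Union_disjoint[OF partition_onD2[OF P] finA] by simp
      also have "\<Union>P = ?M" using partition_onD1[OF P] by simp
      finally show ?thesis by simp
    qed
    have "(\<Sum>A\<in>P. (m - card A)) + (\<Sum>A\<in>P. card A) = (\<Sum>A\<in>P. m)"
      unfolding sum.distrib[symmetric] using cm by (intro sum.cong) (auto simp: less_imp_le)
    hence s2: "(\<Sum>A\<in>P. (m - card A)) = ?k * m - m" using scard by simp
    have "(\<Sum>A\<in>P. (m - card A) * ?C) = (?k * m - m) * ?C"
      using s2 by (simp add: sum_distrib_right[symmetric])
    hence ineq: "(m - 1) * (\<Sum>A\<in>P. (m - card A) choose t) < (?k * m - m) * ?C"
      using lt by (simp add: sum_distrib_left)
    have km: "?k * m - m = (?k - 1) * m" by (simp add: diff_mult_distrib)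
    have rineq: "(real m - 1) * real (\<Sum>A\<in>P. (m - card A) choose t) < (real ?k - 1) * (real m * real ?C)"
    proof -
      have "real ((m - 1) * (\<Sum>A\<in>P. (m - card A) choose t)) < real ((?k - 1) * m * ?C)"
      proof -
        have "(m - 1) * (\<Sum>A\<in>P. (m - card A) choose t) < (?k - 1) * m * ?C"
          using ineq km by simp
        thus ?thesis by (simp only: of_nat_less_iff)
      qed
      moreover have "real (m - 1) = real m - 1" "real (?k - 1) = real ?k - 1" using k assms by auto
      ultimately show ?thesis by (simp only: of_nat_mult mult.assoc)
    qed
    have DP: "pin_Delta ?M (K_edges m t) (\<lambda>e. e) P = real (m choose t) - real (\<Sum>A\<in>P. (m - card A) choose t) / (real ?k - 1)"
      using Delta_eq[OF P k, of t] assms by simp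
    have p1: "real ?k - 1 > 0" using k by simp
    have p2: "real m - 1 > 0" using assms by simp
    have "real (\<Sum>A\<in>P. (m - card A) choose t) / (real ?k - 1) < real (m * ?C) / (real m - 1)"
      using rineq p1 p2 by (simp add: divide_less_eq less_divide_eq mult.commute mult.left_commute)
    thus ?thesis unfolding DP DS by simp
  qed
  show ?thesis unfolding strict_type_S_def using Sp cS assms main by auto
qed


end
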